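(* Let $\Omega\subset\mathbb R^d$ be a bounded Borel set, $f:\Omega\to[0,\infty)$ with $\int_\Omega f=1$, $p\ge1$, $x_1,\dots,x_k\in\Omega$, and $h_1,\dots,h_k:[0,1]\to[0,\infty)$ arbitrary functions. Then $$\inf_{(A_i)_{i=1}^k}\Big\{\sum_{i=1}^k\int_{A_i}\Big[|x-x_i|^p+h_i\Big(\int_{A_i}f\,dx\Big)\Big]f(x)\,dx\Big\}=\inf_{c\in S}\Big\{W_p^p\Big(f\mathcal L^d\llcorner\Omega,\sum_{i=1}^kc_i\delta_{x_i}\Big)+\sum_{i=1}^kh_i(c_i)c_i\Big\},$$ where the first infimum is over all partitions $(A_i)_{i=1,\dots,k}$ of $\Omega$.
   Context: A partition of $\Omega$ is a family of Borel sets pairwise disjoint up to $f$-negligible sets whose union has full measure for $f\,dx$. $S=\{c\in\mathbb R^k:c_i\ge0,\sum_ic_i=1\}$. $W_p^p(\mu,\nu)=\inf\{\int|x-y|^p\,d\gamma\}$ over probability measures $\gamma$ on $\Omega\times\Omega$ with marginals $\mu$ and $\nu$. *)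

theory Defs
  imports "HOL-Probability.Probability"
begin

definition fmeas :: "'a::euclidean_space set \<Rightarrow> ('a \<Rightarrow> real) \<Rightarrow> 'a measure" where
  "fmeas \<Omega> f = density lborel (\<lambda>x. indicator \<Omega> x * ennreal (f x))"

definition dirac_comb :: "nat \<Rightarrow> (nat \<Rightarrow> real) \<Rightarrow> (nat \<Rightarrow> 'a::euclidean_space) \<Rightarrow> 'a measure" where
  "dirac_comb k c xs = measure_of UNIV (sets lborel)
     (\<lambda>A. \<Sum>i<k. ennreal (c i) * indicator A (xs i))"

definition simplex_S :: "nat \<Rightarrow> (nat \<Rightarrow> real) set" where
  "simplex_S k = {c. (\<forall>i<k. 0 \<le> c i) \<and> (\<forall>i\<ge>k. c i = 0) \<and> (\<Sum>i<k. c i) = 1}"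

definition couplings :: "'a::euclidean_space measure \<Rightarrow> 'a measure \<Rightarrow> ('a \<times> 'a) measure set" where
  "couplings \<mu> \<nu> = {\<gamma>. sets \<gamma> = sets (lborel \<Otimes>\<^sub>M lborel) \<and> prob_space \<gamma> \<and>
       distr \<gamma> lborel fst = \<mu> \<and> distr \<gamma> lborel snd = \<nu>}"

definition Wpp :: "real \<Rightarrow> 'a::euclidean_space measure \<Rightarrow> 'a measure \<Rightarrow> ennreal" where
  "Wpp p \<mu> \<nu> = (INF \<gamma>\<in>couplings \<mu> \<nu>. \<integral>\<^sup>+ z. ennreal (norm (fst z - snd z) powr p) \<partial>\<gamma>)"

text \<open>Partitions of Omega (up to f-negligible sets) into k Borel pieces.\<close>
definition partitions :: "nat \<Rightarrow> 'a::euclidean_space set \<Rightarrow> ('a \<Rightarrow> real) \<Rightarrow> (nat \<Rightarrow> 'a set) set" where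
  "partitions k \<Omega> f = {A. (\<forall>i<k. A i \<in> sets borel \<and> A i \<subseteq> \<Omega>) \<and>
      (\<forall>i<k. \<forall>j<k. i \<noteq> j \<longrightarrow> emeasure (fmeas \<Omega> f) (A i \<inter> A j) = 0) \<and>
      emeasure (fmeas \<Omega> f) (\<Omega> - (\<Union>i<k. A i)) = 0}"

end

theory Submission
  imports Defs
begin


lemma sets_dirac_comb[simp, measurable_cong]: "sets (dirac_comb k c xs) = sets borel"
  unfolding dirac_comb_def by (simp add: sets.sigma_sets_eq[of borel, simplified])

lemma space_dirac_comb[simp]: "space (dirac_comb k c xs) = UNIV"
  unfolding dirac_comb_def by simp

lemma emeasure_dirac_comb:
  assumes "C \<in> sets borel"
  shows "emeasure (dirac_comb k c xs) C = (\<Sum>i<k. ennreal (c i) * indicator C (xs i))"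
  unfolding dirac_comb_def
proof (rule emeasure_measure_of_sigma)
  show "sigma_algebra UNIV (sets lborel)"
    using sets.sigma_algebra_axioms[of borel] by simp
  show "positive (sets lborel) (\<lambda>A. \<Sum>i<k. ennreal (c i) * indicator A (xs i))"
    by (simp add: positive_def)
  show "countably_additive (sets lborel) (\<lambda>A. \<Sum>i<k. ennreal (c i) * indicator A (xs i))"
  proof (rule countably_additiveI)
    fix A :: "nat \<Rightarrow> 'a set" assume "disjoint_family A"
    then show "(\<Sum>n. \<Sum>i<k. ennreal (c i) * indicator (A n) (xs i)) =
      (\<Sum>i<k. ennreal (c i) * indicator (\<Union> (range A)) (xs i))"
      by (subst suminf_sum) (auto intro: summableI simp: suminf_indicator)
  qed
qed (use assms in auto)

lemma sum_ind_unique: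
  fixes g :: "nat \<Rightarrow> 'b::comm_semiring_1"
  assumes "j < k" "x \<in> B j" "\<And>i. i < k \<Longrightarrow> i \<noteq> j \<Longrightarrow> x \<notin> B i"
  shows "(\<Sum>i<k. g i * indicator (B i) x) = g j"
proof -
  have "(\<Sum>i<k. g i * indicator (B i) x) = (\<Sum>i<k. if i = j then g i else 0)"
    using assms by (intro sum.cong) (auto simp: indicator_def)
  then show ?thesis using assms(1) by simp
qed

lemma sum_ind_unique_R:
  fixes g :: "nat \<Rightarrow> 'b::real_vector"
  assumes "j < k" "x \<in> B j" "\<And>i. i < k \<Longrightarrow> i \<noteq> j \<Longrightarrow> x \<notin> B i"
  shows "(\<Sum>i<k. indicator (B i) x *\<^sub>R g i) = g j"
proof -
  have "(\<Sum>i<k. indicator (B i) x *\<^sub>R g i) = (\<Sum>i<k. if i = j then g i else 0)"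
    using assms by (intro sum.cong) (auto simp: indicator_def)
  then show ?thesis using assms(1) by simp
qed

lemma cost_meas[measurable]: "(\<lambda>z::'a::euclidean_space \<times> 'a. ennreal (norm (fst z - snd z) powr p)) \<in> borel_measurable (lborel \<Otimes>\<^sub>M lborel)"
  by measurable

lemma group_sum:
  fixes c :: "nat \<Rightarrow> real" and F :: "'b \<Rightarrow> real"
  assumes "finite I"
  shows "(\<Sum>i\<in>I. F (xs i) * c i) = (\<Sum>y\<in>xs`I. F y * (\<Sum>i\<in>I. c i * indicator {y} (xs i)))"
proof -
  have "(\<Sum>y\<in>xs`I. F y * (\<Sum>i\<in>I. c i * indicator {y} (xs i))) =
      (\<Sum>i\<in>I. \<Sum>y\<in>xs`I. F y * (c i * indicator {y} (xs i)))"
    by (simp add: sum_distrib_left sum.swap[of _ "xs`I" I])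
  also have "\<dots> = (\<Sum>i\<in>I. F (xs i) * c i)"
  proof (intro sum.cong refl)
    fix i assume i: "i \<in> I"
    have "(\<Sum>y\<in>xs`I. F y * (c i * indicator {y} (xs i))) = (\<Sum>y\<in>xs`I. if y = xs i then F (xs i) * c i else 0)"
      by (intro sum.cong) (auto simp: indicator_def)
    also have "\<dots> = F (xs i) * c i" using i assms by simp
    finally show "(\<Sum>y\<in>xs`I. F y * (c i * indicator {y} (xs i))) = F (xs i) * c i" .
  qed
  finally show ?thesis by simp
qed

lemma coupling_facts:
  assumes "\<gamma> \<in> couplings \<mu> \<nu>"
  shows "space \<gamma> = UNIV" "prob_space \<gamma>" "sets \<gamma> = sets (lborel \<Otimes>\<^sub>M lborel)"
    "\<And>B. B \<in> sets borel \<Longrightarrow> emeasure \<gamma> (B \<times> UNIV) = emeasure \<mu> B"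
    "\<And>C. C \<in> sets borel \<Longrightarrow> emeasure \<gamma> (UNIV \<times> C) = emeasure \<nu> C"
proof -
  have s: "sets \<gamma> = sets (lborel \<Otimes>\<^sub>M lborel)" and "prob_space \<gamma>"
    and d1: "distr \<gamma> lborel fst = \<mu>" and d2: "distr \<gamma> lborel snd = \<nu>"
    using assms unfolding couplings_def by auto
  then show "prob_space \<gamma>" "sets \<gamma> = sets (lborel \<Otimes>\<^sub>M lborel)" by auto
  have sp: "space \<gamma> = UNIV" using sets_eq_imp_space_eq[OF s] by (simp add: space_pair_measure)
  then show "space \<gamma> = UNIV" .
  have mf: "fst \<in> measurable \<gamma> lborel"
    unfolding measurable_cong_sets[OF s refl] by (rule measurable_fst)
  fix B :: "'a set" assume B: "B \<in> sets borel"
  have "emeasure \<mu> B = emeasure (distr \<gamma> lborel fst) B" using d1 by simp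
  also have "\<dots> = emeasure \<gamma> (fst -` B \<inter> space \<gamma>)" using B mf by (subst emeasure_distr) auto
  also have "fst -` B \<inter> space \<gamma> = B \<times> UNIV" using sp by auto
  finally show "emeasure \<gamma> (B \<times> UNIV) = emeasure \<mu> B" by simp
next
  have s: "sets \<gamma> = sets (lborel \<Otimes>\<^sub>M lborel)" and d2: "distr \<gamma> lborel snd = \<nu>"
    using assms unfolding couplings_def by auto
  have sp: "space \<gamma> = UNIV" using sets_eq_imp_space_eq[OF s] by (simp add: space_pair_measure)
  have mf: "snd \<in> measurable \<gamma> lborel"
    unfolding measurable_cong_sets[OF s refl] by (rule measurable_snd)
  fix C :: "'a set" assume C: "C \<in> sets borel"
  have "emeasure \<nu> C = emeasure (distr \<gamma> lborel snd) C" using d2 by simp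
  also have "\<dots> = emeasure \<gamma> (snd -` C \<inter> space \<gamma>)" using C mf by (subst emeasure_distr) auto
  also have "snd -` C \<inter> space \<gamma> = UNIV \<times> C" using sp by auto
  finally show "emeasure \<gamma> (UNIV \<times> C) = emeasure \<nu> C" by simp
qed

lemma ucont:
  fixes R p \<eta> :: real
  assumes "0 < p" "0 < \<eta>"
  shows "\<exists>\<delta>>0. \<forall>x r y::'a::euclidean_space. x \<in> cball 0 R \<longrightarrow> r \<in> cball 0 R \<longrightarrow> y \<in> cball 0 R \<longrightarrow> dist x r < \<delta> \<longrightarrow>
      norm (r - y) powr p < norm (x - y) powr p + \<eta> \<and> norm (x - y) powr p < norm (r - y) powr p + \<eta>"
proof -
  let ?S = "cball (0::'a) (2 * R)"
  have "continuous_on ?S (\<lambda>z. norm z powr p)"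
    using assms by (intro continuous_on_powr') (auto intro: continuous_intros)
  then have "uniformly_continuous_on ?S (\<lambda>z. norm z powr p)"
    by (intro compact_uniformly_continuous) auto
  then obtain \<delta> where d: "\<delta> > 0" "\<And>z z'. z \<in> ?S \<Longrightarrow> z' \<in> ?S \<Longrightarrow> dist z' z < \<delta> \<Longrightarrow>
      dist (norm z' powr p) (norm z powr p) < \<eta>"
    unfolding uniformly_continuous_on_def using assms(2) by metis
  show ?thesis
  proof (intro exI[of _ \<delta>] conjI allI impI)
    fix x r y :: 'a assume xr: "x \<in> cball 0 R" "r \<in> cball 0 R" "y \<in> cball 0 R" "dist x r < \<delta>"
    have mem: "x - y \<in> ?S" "r - y \<in> ?S" using xr
      by (auto simp: dist_norm intro: order_trans[OF norm_triangle_ineq4])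
    have dd: "dist (r - y) (x - y) < \<delta>" "dist (x - y) (r - y) < \<delta>" using xr(4)
      by (auto simp: dist_norm norm_minus_commute)
    show "norm (r - y) powr p < norm (x - y) powr p + \<eta>"
      using d(2)[OF mem(1) mem(2) dd(1)] by (auto simp: dist_real_def)
    show "norm (x - y) powr p < norm (r - y) powr p + \<eta>"
      using d(2)[OF mem(2) mem(1) dd(2)] by (auto simp: dist_real_def)
  qed (use d in auto)
qed

locale OTS =
  fixes \<Omega> :: "'a::euclidean_space set" and f :: "'a \<Rightarrow> real"
  assumes Om[measurable]: "\<Omega> \<in> sets borel" and bnd: "bounded \<Omega>"
    and fnn: "\<And>x. x \<in> \<Omega> \<Longrightarrow> 0 \<le> f x"
    and fint: "set_integrable lborel \<Omega> f" and f1: "(\<integral>x\<in>\<Omega>. f x \<partial>lborel) = 1"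
begin

definition dens :: "'a \<Rightarrow> ennreal" where "dens x = indicator \<Omega> x * ennreal (f x)"

lemma dens_alt: "dens x = ennreal (indicator \<Omega> x * f x)"
  by (auto simp: dens_def indicator_def)

lemma dens_meas[measurable]: "dens \<in> borel_measurable borel"
proof -
  have "(\<lambda>x. indicator \<Omega> x *\<^sub>R f x) \<in> borel_measurable lborel"
    using fint unfolding set_integrable_def by (rule borel_measurable_integrable)
  then have "(\<lambda>x. indicator \<Omega> x * f x) \<in> borel_measurable borel" by simp
  then show ?thesis unfolding dens_alt[abs_def] by measurable
qed

lemma mu_def: "fmeas \<Omega> f = density lborel dens"
  unfolding fmeas_def dens_def ..

lemma sets_mu[simp, measurable_cong]: "sets (fmeas \<Omega> f) = sets borel"
  by (simp add: mu_def)
lemma space_mu[simp]: "space (fmeas \<Omega> f) = UNIV"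
  by (simp add: mu_def)

lemma emeasure_mu: "A \<in> sets borel \<Longrightarrow> emeasure (fmeas \<Omega> f) A = (\<integral>\<^sup>+x. dens x * indicator A x \<partial>lborel)"
  unfolding mu_def by (rule emeasure_density) auto

lemma nn_int_mu: "g \<in> borel_measurable borel \<Longrightarrow> (\<integral>\<^sup>+x. g x \<partial>fmeas \<Omega> f) = (\<integral>\<^sup>+x. dens x * g x \<partial>lborel)"
  unfolding mu_def by (rule nn_integral_density) auto

lemma mu_UNIV: "emeasure (fmeas \<Omega> f) UNIV = 1"
proof -
  have "emeasure (fmeas \<Omega> f) UNIV = (\<integral>\<^sup>+x. ennreal (indicator \<Omega> x * f x) \<partial>lborel)"
    by (simp add: emeasure_mu dens_alt)
  also have "\<dots> = ennreal (\<integral>x. indicator \<Omega> x * f x \<partial>lborel)"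
    using fint fnn unfolding set_integrable_def
    by (intro nn_integral_eq_integral) (auto simp: indicator_def)
  also have "(\<integral>x. indicator \<Omega> x * f x \<partial>lborel) = 1" using f1 by (simp add: set_lebesgue_integral_def)
  finally show ?thesis by simp
qed

lemma prob_mu: "prob_space (fmeas \<Omega> f)"
  by (rule prob_spaceI) (simp add: mu_UNIV)

lemma finite_mu[simp]: "emeasure (fmeas \<Omega> f) A \<noteq> top"
  using prob_mu by (simp add: prob_space_def finite_measure.emeasure_finite)

lemma AE_Om: "AE x in fmeas \<Omega> f. x \<in> \<Omega>"
proof -
  have "emeasure (fmeas \<Omega> f) (-\<Omega>) = 0"
  proof -
    have "(\<lambda>x. dens x * indicator (-\<Omega>) x) = (\<lambda>x. 0)"
      by (auto simp: dens_def indicator_def)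
    then show ?thesis by (simp add: emeasure_mu)
  qed
  then show ?thesis by (intro AE_I[of _ _ "-\<Omega>"]) auto
qed

lemma null_mu: "N \<in> null_sets lborel \<Longrightarrow> N \<in> null_sets (fmeas \<Omega> f)"
  unfolding mu_def
  by (subst null_sets_density_iff) (auto dest: AE_not_in elim!: eventually_mono simp: null_setsD2)

lemma hyper_null: "b \<noteq> 0 \<Longrightarrow> {x. b \<bullet> x = t} \<in> null_sets (fmeas \<Omega> f)"
proof -
  assume b: "b \<noteq> 0"
  have "negligible {x::'a. b \<bullet> x = t}" using b by (intro negligible_hyperplane) auto
  then have "{x::'a. b \<bullet> x = t} \<in> null_sets lebesgue" by (simp add: negligible_iff_null_sets)
  moreover have "{x::'a. b \<bullet> x = t} \<in> sets lborel" by measurable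
  ultimately have "{x::'a. b \<bullet> x = t} \<in> null_sets lborel"
    using null_sets_completion_iff by (metis sets_lborel)
  then show ?thesis by (rule null_mu)
qed

lemma split1:
  assumes Q[measurable]: "Q \<in> sets borel" and s: "0 \<le> s" "s \<le> measure (fmeas \<Omega> f) Q"
  shows "\<exists>P. P \<in> sets borel \<and> P \<subseteq> Q \<and> measure (fmeas \<Omega> f) P = s"
proof -
  let ?\<mu> = "fmeas \<Omega> f"
  obtain b :: 'a where b: "b \<in> Basis" using nonempty_Basis by blast
  then have b0: "b \<noteq> 0" by auto
  define MQ where "MQ = density ?\<mu> (indicator Q)"
  define N where "N = distr MQ borel (\<lambda>x. b \<bullet> x)"
  have sMQ[simp, measurable_cong]: "sets MQ = sets borel" by (simp add: MQ_def)
  have fmMQ: "finite_measure MQ" unfolding MQ_def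
    using prob_mu by (intro finite_measure.finite_measure_restricted) (auto simp: prob_space_def)
  have [simp]: "space MQ = UNIV" by (simp add: MQ_def)
  have sN[simp]: "sets N = sets borel" by (simp add: N_def)
  have NA: "measure N A = measure ?\<mu> (Q \<inter> {x. b \<bullet> x \<in> A})" if "A \<in> sets borel" for A
  proof -
    have "measure N A = measure MQ ((\<lambda>x. b \<bullet> x) -` A \<inter> space MQ)"
      unfolding N_def using that by (intro measure_distr) auto
    also have "\<dots> = measure ?\<mu> (Q \<inter> ((\<lambda>x. b \<bullet> x) -` A))"
    proof -
      have m: "(\<lambda>x. b \<bullet> x) \<in> borel_measurable (borel :: 'a measure)" by measurable
      have "(\<lambda>x. b \<bullet> x) -` A \<in> sets borel"
        using measurable_sets[OF m that] by simp
      then show ?thesis unfolding MQ_def using that by (subst measure_restricted) auto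
    qed
    finally show ?thesis by (simp add: vimage_def)
  qed
  have fN: "finite_borel_measure N"
  proof -
    have "finite_measure N" unfolding N_def
      using fmMQ by (intro finite_measure.finite_measure_distr) auto
    then show ?thesis unfolding finite_borel_measure_def finite_borel_measure_axioms_def by simp
  qed
  interpret N: finite_borel_measure N by (rule fN)
  have cdfN: "cdf N t = measure ?\<mu> (Q \<inter> {x. b \<bullet> x \<le> t})" for t
    using NA[of "{..t}"] unfolding cdf_def by simp
  have cont: "isCont (cdf N) t" for t
  proof -
    have "measure N {t} = measure ?\<mu> (Q \<inter> {x. b \<bullet> x = t})" by (simp add: NA)
    also have "\<dots> = 0"
    proof (rule measure_eq_0_null_sets, rule null_sets_subset[OF hyper_null[OF b0, of t]])
      show "Q \<inter> {x. b \<bullet> x = t} \<in> sets ?\<mu>" by simp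
    qed auto
    finally show ?thesis by (simp add: N.isCont_cdf)
  qed
  have spN: "measure N (space N) = measure ?\<mu> Q"
    using NA[of UNIV] by (simp add: N.borel_UNIV)
  show ?thesis
  proof (cases "s = 0")
    case True then show ?thesis by (intro exI[of _ "{}"]) auto
  next
    case s0: False
    show ?thesis
    proof (cases "s = measure ?\<mu> Q")
      case True then show ?thesis using Q by (intro exI[of _ Q]) auto
    next
      case False
      with s s0 have s1: "0 < s" "s < measure ?\<mu> Q" by auto
      have "\<forall>\<^sub>F t in at_bot. cdf N t < s"
        using order_tendstoD(2)[OF N.cdf_lim_at_bot s1(1)] .
      then obtain a where a: "cdf N a < s" by (auto simp: eventually_at_bot_linorder)
      have "\<forall>\<^sub>F t in at_top. s < cdf N t"
        using order_tendstoD(1)[OF N.cdf_lim_at_top, of s] s1 spN by simp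
      then obtain c where c: "s < cdf N c" by (auto simp: eventually_at_top_linorder)
      have ac: "a \<le> c"
      proof (rule ccontr)
        assume "\<not> a \<le> c" then have "cdf N c \<le> cdf N a" by (intro N.cdf_nondecreasing) auto
        with a c show False by simp
      qed
      have "continuous_on {a..c} (cdf N)"
        using cont by (intro continuous_at_imp_continuous_on) auto
      then obtain t where "cdf N t = s"
        using IVT'[of "cdf N" a s c] a c ac by force
      then show ?thesis
        by (intro exI[of _ "Q \<inter> {x. b \<bullet> x \<le> t}"]) (auto simp: cdfN)
    qed
  qed
qed

lemma splitk:
  fixes k :: nat
  assumes "Q \<in> sets borel" "0 < k" "\<And>i. i < k \<Longrightarrow> 0 \<le> w i"
    "(\<Sum>i<k. w i) = measure (fmeas \<Omega> f) Q"
  shows "\<exists>P. (\<forall>i<k. P i \<in> sets borel \<and> P i \<subseteq> Q \<and> measure (fmeas \<Omega> f) (P i) = w i) \<and>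
    (\<forall>i<k. \<forall>j<k. i \<noteq> j \<longrightarrow> P i \<inter> P j = {}) \<and> (\<Union>i<k. P i) = Q"
  using assms
proof (induction k arbitrary: Q)
  case 0 then show ?case by simp
next
  case (Suc k)
  show ?case
  proof (cases "k = 0")
    case True
    then show ?thesis using Suc.prems by (intro exI[of _ "\<lambda>_. Q"]) auto
  next
    case False
    have "0 \<le> (\<Sum>i<k. w i)" using Suc.prems by (intro sum_nonneg) auto
    then have wk: "w k \<le> measure (fmeas \<Omega> f) Q" using Suc.prems(4) by simp
    obtain P' where P': "P' \<in> sets borel" "P' \<subseteq> Q" "measure (fmeas \<Omega> f) P' = w k"
      using split1[OF Suc.prems(1) _ wk] Suc.prems(3) by auto
    have mQ': "measure (fmeas \<Omega> f) (Q - P') = measure (fmeas \<Omega> f) Q - w k"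
      using P' Suc.prems(1) by (subst measure_Diff) (auto simp: finite_mu)
    have "(\<Sum>i<k. w i) = measure (fmeas \<Omega> f) (Q - P')"
      using mQ' Suc.prems(4) by simp
    then obtain P where P: "\<forall>i<k. P i \<in> sets borel \<and> P i \<subseteq> Q - P' \<and> measure (fmeas \<Omega> f) (P i) = w i"
      "\<forall>i<k. \<forall>j<k. i \<noteq> j \<longrightarrow> P i \<inter> P j = {}" "(\<Union>i<k. P i) = Q - P'"
      using Suc.IH[of "Q - P'"] Suc.prems P' False by auto
    define P'' where "P'' i = (if i = k then P' else P i)" for i
    have "(\<Union>i<Suc k. P'' i) = (\<Union>i<k. P i) \<union> P'"
      unfolding P''_def lessThan_Suc by auto
    also have "\<dots> = Q" using P(3) P'(2) by auto
    finally show ?thesis using P P'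
      by (intro exI[of _ P'']) (auto simp: P''_def less_Suc_eq)
  qed
qed

lemma term_conv:
  assumes A[measurable]: "A \<in> sets borel" and AO: "A \<subseteq> \<Omega>" and g[measurable]: "g \<in> borel_measurable borel"
    and gnn: "\<And>x. 0 \<le> g x" and a: "0 \<le> a"
  shows "(\<integral>\<^sup>+x\<in>A. ennreal ((g x + a) * f x) \<partial>lborel) =
    (\<integral>\<^sup>+x. ennreal (g x) * indicator A x \<partial>fmeas \<Omega> f) + ennreal (a * measure (fmeas \<Omega> f) A)"
proof -
  have pw: "ennreal ((g x + a) * f x) * indicator A x =
      dens x * (ennreal (g x) * indicator A x) + ennreal a * (dens x * indicator A x)" for x
  proof (cases "x \<in> A")
    case True
    then have "x \<in> \<Omega>" "0 \<le> f x" using AO fnn by auto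
    have "ennreal ((g x + a) * f x) = ennreal (g x * f x) + ennreal (a * f x)"
      using \<open>0 \<le> f x\<close> gnn[of x] a by (simp add: distrib_right ennreal_plus)
    also have "\<dots> = ennreal (f x) * ennreal (g x) + ennreal a * ennreal (f x)"
      using \<open>0 \<le> f x\<close> gnn[of x] a by (simp add: ennreal_mult mult.commute)
    finally show ?thesis using True \<open>x \<in> \<Omega>\<close> by (simp add: dens_def)
  qed simp
  have "(\<integral>\<^sup>+x\<in>A. ennreal ((g x + a) * f x) \<partial>lborel) =
      (\<integral>\<^sup>+x. dens x * (ennreal (g x) * indicator A x) + ennreal a * (dens x * indicator A x) \<partial>lborel)"
    by (simp add: pw)
  also have "\<dots> = (\<integral>\<^sup>+x. dens x * (ennreal (g x) * indicator A x) \<partial>lborel) +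
      ennreal a * (\<integral>\<^sup>+x. dens x * indicator A x \<partial>lborel)"
    by (subst nn_integral_add) (auto simp: nn_integral_cmult)
  also have "(\<integral>\<^sup>+x. dens x * (ennreal (g x) * indicator A x) \<partial>lborel) =
      (\<integral>\<^sup>+x. ennreal (g x) * indicator A x \<partial>fmeas \<Omega> f)"
    by (subst nn_int_mu) auto
  also have "(\<integral>\<^sup>+x. dens x * indicator A x \<partial>lborel) = emeasure (fmeas \<Omega> f) A"
    by (simp add: emeasure_mu)
  also have "ennreal a * emeasure (fmeas \<Omega> f) A = ennreal (a * measure (fmeas \<Omega> f) A)"
    using a by (simp add: emeasure_eq_ennreal_measure ennreal_mult)
  finally show ?thesis .
qed

lemma mu_Om: "emeasure (fmeas \<Omega> f) \<Omega> = 1"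
proof -
  have "emeasure (fmeas \<Omega> f) \<Omega> = emeasure (fmeas \<Omega> f) UNIV"
    using AE_Om by (intro emeasure_eq_AE) auto
  then show ?thesis by (simp add: mu_UNIV)
qed

lemma dir1:
  fixes p :: real and k :: nat and xs :: "nat \<Rightarrow> 'a" and h :: "nat \<Rightarrow> real \<Rightarrow> real"
  assumes A: "A \<in> partitions k \<Omega> f"
    and hnn: "\<And>i t. i < k \<Longrightarrow> 0 \<le> t \<Longrightarrow> t \<le> 1 \<Longrightarrow> 0 \<le> h i t"
  shows "\<exists>c\<in>simplex_S k. Wpp p (fmeas \<Omega> f) (dirac_comb k c xs) + (\<Sum>i<k. ennreal (h i (c i) * c i))
     \<le> (\<Sum>i<k. \<integral>\<^sup>+ x\<in>A i. ennreal ((norm (x - xs i) powr p + h i (measure (fmeas \<Omega> f) (A i))) * f x) \<partial>lborel)"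
proof -
  let ?\<mu> = "fmeas \<Omega> f"
  have Ab[measurable]: "\<And>i. i < k \<Longrightarrow> A i \<in> sets borel" and AO: "\<And>i. i < k \<Longrightarrow> A i \<subseteq> \<Omega>"
    and Adisj: "\<And>i j. i < k \<Longrightarrow> j < k \<Longrightarrow> i \<noteq> j \<Longrightarrow> emeasure ?\<mu> (A i \<inter> A j) = 0"
    and Acov: "emeasure ?\<mu> (\<Omega> - (\<Union>i<k. A i)) = 0"
    using A unfolding partitions_def by auto
  have k0: "0 < k"
  proof (rule ccontr)
    assume "\<not> 0 < k" then have "k = 0" by simp
    then show False using Acov mu_Om by simp
  qed
  have UAb[measurable]: "(\<Union>i<k. A i) \<in> sets borel" using Ab by auto
  define Z where "Z = (\<Omega> - (\<Union>i<k. A i)) \<union> (\<Union>i\<in>{..<k}. \<Union>j\<in>{..<k} - {i}. A i \<inter> A j)"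
  have Znull: "Z \<in> null_sets ?\<mu>"
    unfolding Z_def
  proof (intro null_sets.Un null_sets_UN')
    show "\<Omega> - (\<Union>i<k. A i) \<in> null_sets ?\<mu>" using Acov by (auto intro: null_setsI)
    fix i j assume "i \<in> {..<k}" "j \<in> {..<k} - {i}"
    then show "A i \<inter> A j \<in> null_sets ?\<mu>" using Adisj[of i j] Ab[of i] Ab[of j]
      by (auto intro!: null_setsI)
  qed auto
  have AEgood: "AE x in ?\<mu>. x \<in> \<Omega> \<and> x \<notin> Z"
    using AE_Om AE_not_in[OF Znull] by eventually_elim auto
  define B where "B i = {x. x \<in> A i \<and> (\<forall>j<i. x \<notin> A j)} \<union> (if i = 0 then - (\<Union>j<k. A j) else {})" for i
  have Bb[measurable]: "B i \<in> sets borel" if "i < k" for i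
  proof -
    have "{x. x \<in> A i \<and> (\<forall>j<i. x \<notin> A j)} = A i - (\<Union>j<i. A j)" by auto
    moreover have "A i - (\<Union>j<i. A j) \<in> sets borel" using that Ab by auto
    moreover have "- (\<Union>j<k. A j) \<in> sets borel" using UAb by (rule borel_comp)
    ultimately show ?thesis unfolding B_def by (simp only: sets.Un if_splits) auto
  qed
  have Bdisj: "x \<notin> B i" if "x \<in> B j" "i < k" "j < k" "i \<noteq> j" for x i j
  proof -
    consider "i < j" | "j < i" using \<open>i \<noteq> j\<close> by linarith
    then show ?thesis
    proof cases
      case 1 then show ?thesis using that by (auto simp: B_def split: if_splits)
    next
      case 2 then show ?thesis using that by (auto simp: B_def split: if_splits)
    qed
  qed
  have Bcov: "\<exists>j<k. x \<in> B j" for x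
  proof (cases "\<exists>i<k. x \<in> A i")
    case True
    then obtain i where "x \<in> A i \<and> i < k" "\<forall>j<i. \<not> (x \<in> A j \<and> j < k)"
      using exists_least_iff[of "\<lambda>i. x \<in> A i \<and> i < k"] by blast
    then show ?thesis by (intro exI[of _ i]) (auto simp: B_def)
  next
    case False then show ?thesis using k0 by (intro exI[of _ 0]) (auto simp: B_def)
  qed
  have BA: "AE x in ?\<mu>. \<forall>i<k. x \<in> B i \<longleftrightarrow> x \<in> A i"
    using AEgood
  proof eventually_elim
    case (elim x)
    have "\<Omega> - (\<Union>i<k. A i) \<subseteq> Z" unfolding Z_def by blast
    then have xU: "\<exists>j<k. x \<in> A j" using elim by blast
    have uniq: "x \<notin> A j" if "x \<in> A i" "i < k" "j < k" "j \<noteq> i" for i j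
    proof
      assume "x \<in> A j"
      moreover have "A i \<inter> A j \<subseteq> Z" unfolding Z_def using that by blast
      ultimately show False using elim that by blast
    qed
    show ?case
    proof (intro allI impI iffI)
      fix i assume "i < k" "x \<in> B i"
      then show "x \<in> A i" using xU by (auto simp: B_def split: if_splits)
    next
      fix i assume "i < k" "x \<in> A i"
      then show "x \<in> B i" using uniq[of i] by (auto simp: B_def)
    qed
  qed
  have mBA: "emeasure ?\<mu> (B i) = emeasure ?\<mu> (A i)" if "i < k" for i
    using that by (intro emeasure_eq_AE) (use BA that in \<open>auto elim!: eventually_mono\<close>)
  define c where "c i = (if i < k then measure ?\<mu> (A i) else 0)" for i
  have UB: "(\<Union>i<k. B i) = UNIV" using Bcov by auto
  have Bdf: "disjoint_family_on B {..<k}"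
    unfolding disjoint_family_on_def using Bdisj by blast
  have csum: "(\<Sum>i<k. c i) = 1"
  proof -
    have "(\<Sum>i<k. c i) = (\<Sum>i<k. measure ?\<mu> (B i))"
      using mBA by (intro sum.cong) (auto simp: c_def measure_def)
    also have "\<dots> = measure ?\<mu> (\<Union>i<k. B i)"
      using Bdf by (intro measure_finite_Union[symmetric]) auto
    also have "\<dots> = 1" using mu_UNIV by (simp add: UB measure_def)
    finally show ?thesis .
  qed
  have cS: "c \<in> simplex_S k" unfolding simplex_S_def using csum by (auto simp: c_def)
  have c01: "0 \<le> c i" "c i \<le> 1" for i
    using prob_space.prob_le_1[OF prob_mu] by (auto simp: c_def)
  define T where "T x = (\<Sum>i<k. indicator (B i) x *\<^sub>R xs i)" for x
  have Tm[measurable]: "T \<in> borel_measurable borel" unfolding T_def by measurable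
  have TB: "T x = xs j" if "j < k" "x \<in> B j" for x j
    unfolding T_def using that Bdisj by (intro sum_ind_unique_R) auto
  define \<gamma> where "\<gamma> = distr ?\<mu> (lborel \<Otimes>\<^sub>M lborel) (\<lambda>x. (x, T x))"
  have pm[measurable]: "(\<lambda>x. (x, T x)) \<in> measurable ?\<mu> (lborel \<Otimes>\<^sub>M lborel)"
    by measurable
  have nu: "distr ?\<mu> lborel T = dirac_comb k c xs"
  proof (rule measure_eqI)
    fix C assume "C \<in> sets (distr ?\<mu> lborel T)"
    then have C[measurable]: "C \<in> sets borel" by simp
    have "emeasure (distr ?\<mu> lborel T) C = emeasure ?\<mu> (T -` C)"
      by (subst emeasure_distr) auto
    also have "T -` C = (\<Union>i<k. T -` C \<inter> B i)" using UB by auto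
    also have "emeasure ?\<mu> \<dots> = (\<Sum>i<k. emeasure ?\<mu> (T -` C \<inter> B i))"
      using Bdf by (intro sum_emeasure[symmetric]) (auto simp: disjoint_family_on_def)
    also have "\<dots> = (\<Sum>i<k. ennreal (c i) * indicator C (xs i))"
    proof (intro sum.cong refl)
      fix i assume i: "i \<in> {..<k}"
      have "T -` C \<inter> B i = (if xs i \<in> C then B i else {})" using TB i by auto
      then show "emeasure ?\<mu> (T -` C \<inter> B i) = ennreal (c i) * indicator C (xs i)"
        using mBA[of i] i by (simp add: c_def emeasure_eq_ennreal_measure indicator_def)
    qed
    also have "\<dots> = emeasure (dirac_comb k c xs) C" by (simp add: emeasure_dirac_comb)
    finally show "emeasure (distr ?\<mu> lborel T) C = emeasure (dirac_comb k c xs) C" .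
  qed simp
  have gc: "\<gamma> \<in> couplings ?\<mu> (dirac_comb k c xs)"
    unfolding couplings_def
  proof (intro CollectI conjI)
    show "sets \<gamma> = sets (lborel \<Otimes>\<^sub>M lborel)" by (simp add: \<gamma>_def)
    show "prob_space \<gamma>" unfolding \<gamma>_def by (intro prob_space.prob_space_distr[OF prob_mu]) auto
    have "distr \<gamma> lborel fst = distr ?\<mu> lborel (fst \<circ> (\<lambda>x. (x, T x)))"
      unfolding \<gamma>_def by (intro distr_distr) auto
    also have "\<dots> = ?\<mu>" by (simp add: o_def distr_id2)
    finally show "distr \<gamma> lborel fst = ?\<mu>" .
    have "distr \<gamma> lborel snd = distr ?\<mu> lborel (snd \<circ> (\<lambda>x. (x, T x)))"
      unfolding \<gamma>_def by (intro distr_distr) auto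
    also have "\<dots> = dirac_comb k c xs" by (simp add: o_def nu)
    finally show "distr \<gamma> lborel snd = dirac_comb k c xs" .
  qed
  have "Wpp p ?\<mu> (dirac_comb k c xs) \<le> (\<integral>\<^sup>+ z. ennreal (norm (fst z - snd z) powr p) \<partial>\<gamma>)"
    unfolding Wpp_def using gc by (rule INF_lower)
  also have "\<dots> = (\<integral>\<^sup>+ x. ennreal (norm (x - T x) powr p) \<partial>?\<mu>)"
    unfolding \<gamma>_def by (subst nn_integral_distr) auto
  also have "\<dots> = (\<integral>\<^sup>+ x. (\<Sum>i<k. ennreal (norm (x - xs i) powr p) * indicator (B i) x) \<partial>?\<mu>)"
  proof (intro nn_integral_cong)
    fix x
    obtain j where j: "j < k" "x \<in> B j" using Bcov by blast
    show "ennreal (norm (x - T x) powr p) = (\<Sum>i<k. ennreal (norm (x - xs i) powr p) * indicator (B i) x)"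
      using sum_ind_unique[of j k x B "\<lambda>i. ennreal (norm (x - xs i) powr p)"] j Bdisj
      by (auto simp: TB)
  qed
  also have "\<dots> = (\<Sum>i<k. \<integral>\<^sup>+ x. ennreal (norm (x - xs i) powr p) * indicator (B i) x \<partial>?\<mu>)"
    by (intro nn_integral_sum) auto
  also have "\<dots> = (\<Sum>i<k. \<integral>\<^sup>+ x. ennreal (norm (x - xs i) powr p) * indicator (A i) x \<partial>?\<mu>)"
  proof (intro sum.cong refl nn_integral_cong_AE)
    fix i assume i: "i \<in> {..<k}"
    show "AE x in ?\<mu>. ennreal (norm (x - xs i) powr p) * indicator (B i) x =
        ennreal (norm (x - xs i) powr p) * indicator (A i) x"
      using BA by (rule eventually_mono) (use i in \<open>auto simp: indicator_def\<close>)
  qed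
  finally have W: "Wpp p ?\<mu> (dirac_comb k c xs) \<le> (\<Sum>i<k. \<integral>\<^sup>+ x. ennreal (norm (x - xs i) powr p) * indicator (A i) x \<partial>?\<mu>)" .
  have R: "(\<Sum>i<k. \<integral>\<^sup>+ x\<in>A i. ennreal ((norm (x - xs i) powr p + h i (measure ?\<mu> (A i))) * f x) \<partial>lborel)
      = (\<Sum>i<k. \<integral>\<^sup>+ x. ennreal (norm (x - xs i) powr p) * indicator (A i) x \<partial>?\<mu>) + (\<Sum>i<k. ennreal (h i (c i) * c i))"
  proof -
    have "(\<Sum>i<k. \<integral>\<^sup>+ x\<in>A i. ennreal ((norm (x - xs i) powr p + h i (measure ?\<mu> (A i))) * f x) \<partial>lborel)
      = (\<Sum>i<k. (\<integral>\<^sup>+ x. ennreal (norm (x - xs i) powr p) * indicator (A i) x \<partial>?\<mu>) + ennreal (h i (c i) * c i))"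
    proof (intro sum.cong refl)
      fix i assume i: "i \<in> {..<k}"
      then have "0 \<le> h i (c i)" using c01[of i] hnn by auto
      then show "(\<integral>\<^sup>+ x\<in>A i. ennreal ((norm (x - xs i) powr p + h i (measure ?\<mu> (A i))) * f x) \<partial>lborel) =
          (\<integral>\<^sup>+ x. ennreal (norm (x - xs i) powr p) * indicator (A i) x \<partial>?\<mu>) + ennreal (h i (c i) * c i)"
        using i AO[of i] by (subst term_conv) (auto simp: c_def)
    qed
    then show ?thesis by (simp add: sum.distrib)
  qed
  show ?thesis using W cS unfolding R by (intro bexI[of _ c] add_right_mono) auto
qed

lemma cells:
  assumes d: "0 < \<delta>" and R: "\<Omega> \<subseteq> cball 0 R"
  shows "\<exists>(m::nat) Q r. (\<forall>j<m. Q j \<in> sets borel \<and> Q j \<subseteq> \<Omega> \<and> r j \<in> cball 0 R \<and> (\<forall>x\<in>Q j. dist x (r j) < \<delta>))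
     \<and> (\<forall>j<m. \<forall>j'<m. j \<noteq> j' \<longrightarrow> Q j \<inter> Q j' = {}) \<and> (\<Union>j<m. Q j) = \<Omega>"
proof -
  have sc: "seq_compact (cball (0::'a) R)" by (intro compact_imp_seq_compact) auto
  obtain K where
    K: "finite K" "K \<subseteq> cball (0::'a) R" "cball (0::'a) R \<subseteq> (\<Union>x\<in>K. ball x \<delta>)"
    using seq_compact_imp_totally_bounded[OF sc, rule_format, OF d] by (elim exE conjE)
  obtain m r where mr: "K = r ` {i. i < (m::nat)}"
    using finite_imp_nat_seg_image_inj_on[OF K(1)] by (elim exE conjE)
  define Q where "Q j = (\<Omega> \<inter> ball (r j) \<delta>) - (\<Union>l<j. ball (r l) \<delta>)" for j
  show ?thesis
  proof (intro exI[of _ m] exI[of _ Q] exI[of _ r] conjI allI impI)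
    fix j assume j: "j < m"
    have "(\<Union>l<j. ball (r l) \<delta>) \<in> sets borel" by (intro sets.finite_UN) auto
    then show "Q j \<in> sets borel" unfolding Q_def by (intro sets.Diff sets.Int) auto
    show "Q j \<subseteq> \<Omega>" by (auto simp: Q_def)
    have "r j \<in> K" using mr j by blast
    then show "r j \<in> cball 0 R" using K(2) by blast
    show "\<forall>x\<in>Q j. dist x (r j) < \<delta>"
    proof
      fix x assume "x \<in> Q j"
      then have "dist (r j) x < \<delta>" unfolding Q_def by auto
      then show "dist x (r j) < \<delta>" by (simp add: dist_commute)
    qed
  next
    fix j j' assume "j < m" "j' < m" "j \<noteq> j'"
    then consider "j < j'" | "j' < j" by linarith
    then show "Q j \<inter> Q j' = {}"
    proof cases
      case 1 then show ?thesis unfolding Q_def by blast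
    next
      case 2 then show ?thesis unfolding Q_def by blast
    qed
  next
    show "(\<Union>j<m. Q j) = \<Omega>"
    proof
      show "(\<Union>j<m. Q j) \<subseteq> \<Omega>" by (auto simp: Q_def)
      show "\<Omega> \<subseteq> (\<Union>j<m. Q j)"
      proof
        fix x assume x: "x \<in> \<Omega>"
        then have "x \<in> cball 0 R" using R by blast
        then obtain z where "z \<in> K" "x \<in> ball z \<delta>" using K(3) by blast
        then obtain j where "j < m" "z = r j" using mr by blast
        then have ex: "\<exists>j. x \<in> ball (r j) \<delta> \<and> j < m" using \<open>x \<in> ball z \<delta>\<close> by blast
        define j where "j = (LEAST j. x \<in> ball (r j) \<delta> \<and> j < m)"
        have j1: "x \<in> ball (r j) \<delta> \<and> j < m" unfolding j_def by (rule LeastI_ex[OF ex])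
        have j2: "x \<notin> ball (r l) \<delta>" if "l < j" for l
        proof
          assume "x \<in> ball (r l) \<delta>"
          then have "j \<le> l" using j1 that unfolding j_def by (intro Least_le) simp
          then show False using that by simp
        qed
        have "x \<in> Q j" unfolding Q_def using x j1 j2 by blast
        then show "x \<in> (\<Union>j<m. Q j)" using j1 by blast
      qed
    qed
  qed
qed

end


lemma measure_eq_sub:
  assumes "finite_measure M" "X \<in> sets M" "Y \<in> sets M" "X \<subseteq> Y" "Y - X \<subseteq> N" "N \<in> sets M" "emeasure M N = 0"
  shows "measure M X = measure M Y"
proof -
  have "N \<in> null_sets M" using assms by (auto intro: null_setsI)
  then have "AE x in M. x \<notin> N" by (rule AE_not_in)
  then have "AE x in M. x \<in> X \<longleftrightarrow> x \<in> Y" by (rule eventually_mono) (use assms in auto)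
  then have "emeasure M X = emeasure M Y" using assms by (intro emeasure_eq_AE) auto
  then show ?thesis by (simp add: measure_def)
qed

context OTS begin

lemma dir2:
  fixes p :: real and k :: nat and xs :: "nat \<Rightarrow> 'a" and h :: "nat \<Rightarrow> real \<Rightarrow> real" and c :: "nat \<Rightarrow> real"
  assumes p: "1 \<le> p" and xsO: "\<And>i. i < k \<Longrightarrow> xs i \<in> \<Omega>"
    and hnn: "\<And>i t. i < k \<Longrightarrow> 0 \<le> t \<Longrightarrow> t \<le> 1 \<Longrightarrow> 0 \<le> h i t"
    and cS: "c \<in> simplex_S k"
    and gc: "\<gamma> \<in> couplings (fmeas \<Omega> f) (dirac_comb k c xs)" and eta: "0 < \<eta>"
  shows "(INF A\<in>partitions k \<Omega> f. \<Sum>i<k. \<integral>\<^sup>+ x\<in>A i.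
             ennreal ((norm (x - xs i) powr p + h i (measure (fmeas \<Omega> f) (A i))) * f x) \<partial>lborel)
     \<le> (\<integral>\<^sup>+ z. ennreal (norm (fst z - snd z) powr p) \<partial>\<gamma>) + (\<Sum>i<k. ennreal (h i (c i) * c i)) + ennreal (2 * \<eta>)"
proof -
  let ?\<mu> = "fmeas \<Omega> f"
  let ?\<nu> = "dirac_comb k c xs"
  have c0: "\<And>i. i < k \<Longrightarrow> 0 \<le> c i" and csum: "(\<Sum>i<k. c i) = 1" using cS by (auto simp: simplex_S_def)
  have k0: "0 < k" using csum by (cases k) auto
  have c1: "c i \<le> 1" if "i < k" for i
  proof -
    have "c i \<le> (\<Sum>i<k. c i)" using that c0 by (intro member_le_sum) auto
    then show ?thesis using csum by simp
  qed
  obtain R where R: "\<Omega> \<subseteq> cball 0 R"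
  proof -
    obtain b where "\<forall>x\<in>\<Omega>. norm x \<le> b" using bnd by (auto simp: bounded_pos)
    then show ?thesis using that[of b] by (auto simp: subset_eq)
  qed
  obtain \<delta> where d: "\<delta> > 0" and dU: "\<And>x r y :: 'a. x \<in> cball 0 R \<Longrightarrow> r \<in> cball 0 R \<Longrightarrow> y \<in> cball 0 R \<Longrightarrow> dist x r < \<delta> \<Longrightarrow>
      norm (r - y) powr p < norm (x - y) powr p + \<eta> \<and> norm (x - y) powr p < norm (r - y) powr p + \<eta>"
  proof -
    have "\<exists>\<delta>>0. \<forall>x r y::'a. x \<in> cball 0 R \<longrightarrow> r \<in> cball 0 R \<longrightarrow> y \<in> cball 0 R \<longrightarrow> dist x r < \<delta> \<longrightarrow>
      norm (r - y) powr p < norm (x - y) powr p + \<eta> \<and> norm (x - y) powr p < norm (r - y) powr p + \<eta>"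
      using p eta by (intro ucont) auto
    then show ?thesis using that by blast
  qed
  obtain m :: nat and Q r where
    QQ: "(\<forall>j<m. Q j \<in> sets borel \<and> Q j \<subseteq> \<Omega> \<and> r j \<in> cball 0 R \<and> (\<forall>x\<in>Q j. dist x (r j) < \<delta>))
     \<and> (\<forall>j<m. \<forall>j'<m. j \<noteq> j' \<longrightarrow> Q j \<inter> Q j' = {}) \<and> (\<Union>j<m. Q j) = \<Omega>"
    using cells[OF d R] by (elim exE)
  have Q: "\<And>j. j < m \<Longrightarrow> Q j \<in> sets borel" "\<And>j. j < m \<Longrightarrow> Q j \<subseteq> \<Omega>"
      "\<And>j. j < m \<Longrightarrow> r j \<in> cball 0 R" "\<And>j x. j < m \<Longrightarrow> x \<in> Q j \<Longrightarrow> dist x (r j) < \<delta>"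
      and Qdisj: "\<And>j j'. j < m \<Longrightarrow> j' < m \<Longrightarrow> j \<noteq> j' \<Longrightarrow> Q j \<inter> Q j' = {}"
      and Qcov: "(\<Union>j<m. Q j) = \<Omega>"
    using QQ by auto
  have sg[measurable_cong]: "sets \<gamma> = sets (lborel \<Otimes>\<^sub>M lborel)"
    and spg: "space \<gamma> = UNIV" and pg: "prob_space \<gamma>"
    and g1: "\<And>B. B \<in> sets borel \<Longrightarrow> emeasure \<gamma> (B \<times> UNIV) = emeasure ?\<mu> B"
    and g2: "\<And>C. C \<in> sets borel \<Longrightarrow> emeasure \<gamma> (UNIV \<times> C) = emeasure ?\<nu> C"
    using coupling_facts[OF gc] by auto
  interpret g: prob_space \<gamma> by (rule pg)
  have prodS: "B \<times> C \<in> sets \<gamma>" if "B \<in> sets borel" "C \<in> sets borel" for B C :: "'a set"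
    using that by (simp add: sg)
  define D where "D = xs ` {..<k}"
  have finD: "finite D" by (simp add: D_def)
  have DO: "D \<subseteq> \<Omega>" using xsO by (auto simp: D_def)
  define mm where "mm y = (\<Sum>i<k. c i * indicator {y} (xs i))" for y
  have mm0: "0 \<le> mm y" for y unfolding mm_def using c0 by (intro sum_nonneg) auto
  have cmm: "c i \<le> mm (xs i)" if "i < k" for i
  proof -
    have "c i = c i * indicator {xs i} (xs i)" by simp
    also have "\<dots> \<le> mm (xs i)" unfolding mm_def using that c0
      by (intro member_le_sum) auto
    finally show ?thesis .
  qed
  have nuC: "emeasure ?\<nu> C = ennreal (\<Sum>i<k. c i * indicator C (xs i))" if "C \<in> sets borel" for C
  proof -
    have "emeasure ?\<nu> C = (\<Sum>i<k. ennreal (c i * indicator C (xs i)))"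
      using that unfolding emeasure_dirac_comb[OF that]
      by (intro sum.cong) (auto simp: indicator_def)
    also have "\<dots> = ennreal (\<Sum>i<k. c i * indicator C (xs i))"
      using c0 by (intro sum_ennreal) auto
    finally show ?thesis .
  qed
  have gy: "measure \<gamma> (UNIV \<times> {y}) = mm y" for y
    using g2[of "{y}"] nuC[of "{y}"] mm0[of y] by (simp add: measure_def mm_def)
  have gD: "emeasure \<gamma> (UNIV \<times> (- D)) = 0"
  proof -
    have "(\<Sum>i<k. c i * indicator (- D) (xs i)) = 0"
      by (intro sum.neutral) (auto simp: D_def)
    moreover have X: "- D \<in> sets borel" using finD by (intro borel_comp borel_closed finite_imp_closed)
    ultimately show ?thesis using g2[OF X] nuC[OF X] by simp
  qed
  have gO: "emeasure \<gamma> ((- \<Omega>) \<times> UNIV) = 0"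
  proof -
    have "emeasure ?\<mu> {x. x \<notin> \<Omega>} = 0" using AE_Om by (simp add: AE_iff_measurable[OF _ refl])
    moreover have "{x. x \<notin> \<Omega>} = - \<Omega>" by auto
    ultimately have "emeasure ?\<mu> (- \<Omega>) = 0" by simp
    moreover have "- \<Omega> \<in> sets borel" by (intro borel_comp Om)
    ultimately show ?thesis using g1[of "- \<Omega>"] by simp
  qed
  have sing: "{y} \<in> sets borel" for y :: 'a by (intro borel_closed closed_singleton)
  have OO: "- \<Omega> \<in> sets borel" by (intro borel_comp Om)
  define G where "G j y = measure \<gamma> (Q j \<times> {y})" for j y
  have G0: "0 \<le> G j y" for j y by (simp add: G_def)
  have Gmm: "G j y \<le> mm y" if "j < m" for j y
  proof -
    have "G j y \<le> measure \<gamma> (UNIV \<times> {y})" unfolding G_def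
      by (intro g.finite_measure_mono) (auto intro!: prodS sing)
    then show ?thesis by (simp add: gy)
  qed
  have GsumD: "(\<Sum>y\<in>D. G j y) = measure ?\<mu> (Q j)" if j: "j < m" for j
  proof -
    have "(\<Sum>y\<in>D. G j y) = measure \<gamma> (\<Union>y\<in>D. Q j \<times> {y})" unfolding G_def
      using finD Q(1)[OF j] sing
      by (intro g.finite_measure_finite_Union[symmetric]) (auto intro!: prodS simp: disjoint_family_on_def)
    also have "(\<Union>y\<in>D. Q j \<times> {y}) = Q j \<times> D" by auto
    also have "measure \<gamma> (Q j \<times> D) = measure \<gamma> (Q j \<times> UNIV)"
    proof (rule measure_eq_sub[OF _ _ _ _ _ _ gD])
      show "finite_measure \<gamma>" by (rule g.finite_measure_axioms)
      have "D \<in> sets borel" using finD by (intro borel_closed finite_imp_closed)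
      then show "Q j \<times> D \<in> sets \<gamma>" using Q(1)[OF j] by (intro prodS)
      show "Q j \<times> UNIV \<in> sets \<gamma>" using Q(1)[OF j] by (intro prodS) auto
      have "- D \<in> sets borel" using finD by (intro borel_comp borel_closed finite_imp_closed)
      then show "UNIV \<times> - D \<in> sets \<gamma>" by (intro prodS) auto
    qed auto
    also have "\<dots> = measure ?\<mu> (Q j)" using g1[OF Q(1)[OF j]] by (simp add: measure_def)
    finally show ?thesis .
  qed
  have GsumJ: "(\<Sum>j<m. G j y) = mm y" for y
  proof -
    have "(\<Sum>j<m. G j y) = measure \<gamma> (\<Union>j<m. Q j \<times> {y})" unfolding G_def
      using Q(1) sing Qdisj
      by (intro g.finite_measure_finite_Union[symmetric]) (auto intro!: prodS simp: disjoint_family_on_def)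
    also have "(\<Union>j<m. Q j \<times> {y}) = \<Omega> \<times> {y}" using Qcov by auto
    also have "measure \<gamma> (\<Omega> \<times> {y}) = measure \<gamma> (UNIV \<times> {y})"
    proof (rule measure_eq_sub[OF _ _ _ _ _ _ gO])
      show "finite_measure \<gamma>" by (rule g.finite_measure_axioms)
      show "\<Omega> \<times> {y} \<in> sets \<gamma>" using sing by (intro prodS Om)
      show "UNIV \<times> {y} \<in> sets \<gamma>" using sing by (intro prodS) auto
      show "(- \<Omega>) \<times> UNIV \<in> sets \<gamma>" using OO by (intro prodS) auto
    qed auto
    also have "\<dots> = mm y" by (rule gy)
    finally show ?thesis .
  qed
  define w where "w j i = (if mm (xs i) = 0 then 0 else G j (xs i) / mm (xs i)) * c i" for j i
  have w0: "0 \<le> w j i" if "i < k" for j i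
    unfolding w_def using G0 mm0 c0[OF that] by auto
  have Wa: "(\<Sum>i<k. w j i * a (xs i)) = (\<Sum>y\<in>D. G j y * a y)" if j: "j < m" for j a
  proof -
    define F where "F y = (if mm y = 0 then 0 else G j y / mm y) * a y" for y
    have "(\<Sum>i<k. w j i * a (xs i)) = (\<Sum>i<k. F (xs i) * c i)"
      unfolding w_def F_def by (intro sum.cong) auto
    also have "\<dots> = (\<Sum>y\<in>D. F y * mm y)" unfolding D_def mm_def by (rule group_sum) simp
    also have "\<dots> = (\<Sum>y\<in>D. G j y * a y)"
    proof (intro sum.cong refl)
      fix y assume "y \<in> D"
      show "F y * mm y = G j y * a y"
      proof (cases "mm y = 0")
        case True
        then have "G j y = 0" using G0[of j y] Gmm[OF j, of y] by simp
        then show ?thesis using True by (simp add: F_def)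
      qed (simp add: F_def)
    qed
    finally show ?thesis .
  qed
  have Wrow: "(\<Sum>i<k. w j i) = measure ?\<mu> (Q j)" if j: "j < m" for j
    using Wa[OF j, of "\<lambda>_. 1"] GsumD[OF j] by simp
  have Wcol: "(\<Sum>j<m. w j i) = c i" if i: "i < k" for i
  proof (cases "mm (xs i) = 0")
    case True
    then have "c i = 0" using cmm[OF i] c0[OF i] by simp
    then show ?thesis by (simp add: w_def)
  next
    case False
    have "(\<Sum>j<m. w j i) = (\<Sum>j<m. G j (xs i)) / mm (xs i) * c i"
      unfolding w_def using False by (simp add: sum_distrib_right sum_divide_distrib)
    then show ?thesis using False by (simp add: GsumJ)
  qed
  have "\<forall>j. \<exists>P. j < m \<longrightarrow> ((\<forall>i<k. P i \<in> sets borel \<and> P i \<subseteq> Q j \<and> measure ?\<mu> (P i) = w j i) \<and>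
    (\<forall>i<k. \<forall>i'<k. i \<noteq> i' \<longrightarrow> P i \<inter> P i' = {}) \<and> (\<Union>i<k. P i) = Q j)"
  proof
    fix j show "\<exists>P. j < m \<longrightarrow> ((\<forall>i<k. P i \<in> sets borel \<and> P i \<subseteq> Q j \<and> measure ?\<mu> (P i) = w j i) \<and>
      (\<forall>i<k. \<forall>i'<k. i \<noteq> i' \<longrightarrow> P i \<inter> P i' = {}) \<and> (\<Union>i<k. P i) = Q j)"
    proof (cases "j < m")
      case True
      from splitk[OF Q(1)[OF True] k0 w0 Wrow[OF True]] show ?thesis by blast
    qed simp
  qed
  then obtain P where P: "\<And>j. j < m \<Longrightarrow> (\<forall>i<k. P j i \<in> sets borel \<and> P j i \<subseteq> Q j \<and> measure ?\<mu> (P j i) = w j i) \<and>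
    (\<forall>i<k. \<forall>i'<k. i \<noteq> i' \<longrightarrow> P j i \<inter> P j i' = {}) \<and> (\<Union>i<k. P j i) = Q j"
    by metis
  have Pb: "P j i \<in> sets borel" and PQ: "P j i \<subseteq> Q j" and mP: "measure ?\<mu> (P j i) = w j i"
    if "j < m" "i < k" for j i using P[OF that(1)] that(2) by auto
  have Pdisj: "P j i \<inter> P j i' = {}" if "j < m" "i < k" "i' < k" "i \<noteq> i'" for j i i'
    using P[OF that(1)] that by auto
  have Pcov: "(\<Union>i<k. P j i) = Q j" if "j < m" for j using P[OF that] by auto
  define A where "A i = (\<Union>j<m. P j i)" for i
  have Ab: "A i \<in> sets borel" if "i < k" for i unfolding A_def using Pb that by auto
  have AO: "A i \<subseteq> \<Omega>" if "i < k" for i unfolding A_def using PQ Q(2) that by blast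
  have PPdisj: "P j i \<inter> P j' i = {}" if "j < m" "j' < m" "j \<noteq> j'" "i < k" for j j' i
    using PQ[OF that(1,4)] PQ[OF that(2,4)] Qdisj[OF that(1-3)] by blast
  have Adisj: "A i \<inter> A i' = {}" if "i < k" "i' < k" "i \<noteq> i'" for i i'
  proof -
    have "P j i \<inter> P j' i' = {}" if "j < m" "j' < m" for j j'
    proof (cases "j = j'")
      case True then show ?thesis using Pdisj \<open>i < k\<close> \<open>i' < k\<close> \<open>i \<noteq> i'\<close> that by blast
    next
      case False then show ?thesis using PQ[OF that(1) \<open>i < k\<close>] PQ[OF that(2) \<open>i' < k\<close>] Qdisj that by blast
    qed
    then show ?thesis unfolding A_def by blast
  qed
  have Acov: "(\<Union>i<k. A i) = \<Omega>"
  proof -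
    have "(\<Union>i<k. A i) = (\<Union>j<m. \<Union>i<k. P j i)" unfolding A_def by blast
    also have "\<dots> = (\<Union>j<m. Q j)" using Pcov by simp
    finally show ?thesis using Qcov by simp
  qed
  have mA: "measure ?\<mu> (A i) = c i" if i: "i < k" for i
  proof -
    have "measure ?\<mu> (A i) = (\<Sum>j<m. measure ?\<mu> (P j i))" unfolding A_def
      using Pb[OF _ i] PPdisj i
      by (intro measure_finite_Union) (auto simp: disjoint_family_on_def)
    also have "\<dots> = (\<Sum>j<m. w j i)" using mP i by simp
    finally show ?thesis using Wcol[OF i] by simp
  qed
  have Apart: "A \<in> partitions k \<Omega> f"
    unfolding partitions_def using Ab AO Adisj Acov by auto
  define a where "a j y = norm (r j - y) powr p" for j y
  have a0: "0 \<le> a j y" for j y by (simp add: a_def)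
  define cost where "cost z = ennreal (norm (fst z - snd z) powr p)" for z :: "'a \<times> 'a"
  have costm: "cost \<in> borel_measurable \<gamma>"
    unfolding cost_def measurable_cong_sets[OF sg refl] by (rule cost_meas)
  have Dsets: "D \<in> sets borel" using finD by (intro borel_closed finite_imp_closed)
  have QYs: "Q j \<times> {y} \<in> sets \<gamma>" if "j < m" for j y using Q(1)[OF that] sing by (intro prodS)
  have indm: "(\<lambda>z. indicator (Q j \<times> {y}) z :: ennreal) \<in> borel_measurable \<gamma>" if "j < m" for j y
    using QYs[OF that] by (rule borel_measurable_indicator)
  define g where "g z = cost z + ennreal (2 * \<eta>)" for z
  have gm: "g \<in> borel_measurable \<gamma>" unfolding g_def using costm by measurable
  have indsum: "(\<Sum>j<m. \<Sum>y\<in>D. indicator (Q j \<times> {y}) z) \<le> (1::ennreal)" for z :: "'a \<times> 'a"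
  proof -
    have "(\<Sum>y\<in>D. indicator (Q j \<times> {y}) z) \<le> (indicator (Q j) (fst z) :: ennreal)" for j
    proof -
      have e1: "(\<Sum>y\<in>D. indicator (Q j \<times> {y}) z) = (indicator (Q j) (fst z) :: ennreal) * (\<Sum>y\<in>D. indicator {y} (snd z))"
        by (simp add: indicator_times sum_distrib_left)
      have "(\<Sum>y\<in>D. indicator {y} (snd z) :: ennreal) = (\<Sum>y\<in>D. if y = snd z then 1 else 0)"
        by (intro sum.cong) (auto simp: indicator_def)
      also have "\<dots> \<le> 1" using finD by (simp add: sum.delta)
      finally have e2: "(\<Sum>y\<in>D. indicator {y} (snd z) :: ennreal) \<le> 1" .
      have "(indicator (Q j) (fst z) :: ennreal) * (\<Sum>y\<in>D. indicator {y} (snd z)) \<le> indicator (Q j) (fst z) * 1"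
        by (rule mult_left_mono[OF e2]) simp
      then show ?thesis using e1 by simp
    qed
    then have "(\<Sum>j<m. \<Sum>y\<in>D. indicator (Q j \<times> {y}) z) \<le> (\<Sum>j<m. indicator (Q j) (fst z) :: ennreal)"
      by (intro sum_mono)
    also have "\<dots> = indicator (\<Union>j<m. Q j) (fst z)"
      using Qdisj by (intro indicator_UN_disjoint[symmetric]) (auto simp: disjoint_family_on_def)
    also have "\<dots> \<le> 1" by (simp add: indicator_def)
    finally show ?thesis .
  qed
  have gbound: "ennreal (\<Sum>j<m. \<Sum>y\<in>D. G j y * (a j y + \<eta>)) \<le> (\<integral>\<^sup>+ z. cost z \<partial>\<gamma>) + ennreal (2 * \<eta>)"
  proof -
    have "ennreal (\<Sum>j<m. \<Sum>y\<in>D. G j y * (a j y + \<eta>)) = (\<Sum>j<m. \<Sum>y\<in>D. ennreal (G j y * (a j y + \<eta>)))"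
      using G0 a0 eta by (simp add: sum_nonneg)
    also have "\<dots> = (\<Sum>j<m. \<Sum>y\<in>D. \<integral>\<^sup>+ z. ennreal (a j y + \<eta>) * indicator (Q j \<times> {y}) z \<partial>\<gamma>)"
    proof (intro sum.cong refl)
      fix j y assume j: "j \<in> {..<m}" and y: "y \<in> D"
      have "ennreal (G j y * (a j y + \<eta>)) = ennreal (a j y + \<eta>) * emeasure \<gamma> (Q j \<times> {y})"
        using G0[of j y] a0[of j y] eta
        by (simp add: G_def g.emeasure_eq_measure ennreal_mult'[symmetric] mult.commute del: ennreal_plus)
      also have "\<dots> = \<integral>\<^sup>+ z. ennreal (a j y + \<eta>) * indicator (Q j \<times> {y}) z \<partial>\<gamma>"
        using QYs j by (simp add: nn_integral_cmult_indicator)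
      finally show "ennreal (G j y * (a j y + \<eta>)) = \<integral>\<^sup>+ z. ennreal (a j y + \<eta>) * indicator (Q j \<times> {y}) z \<partial>\<gamma>" .
    qed
    also have "\<dots> \<le> (\<Sum>j<m. \<Sum>y\<in>D. \<integral>\<^sup>+ z. g z * indicator (Q j \<times> {y}) z \<partial>\<gamma>)"
    proof (intro sum_mono nn_integral_mono)
      fix j y z assume j: "j \<in> {..<m}" and y: "y \<in> D"
      show "ennreal (a j y + \<eta>) * indicator (Q j \<times> {y}) z \<le> g z * indicator (Q j \<times> {y}) z"
      proof (cases "z \<in> Q j \<times> {y}")
        case True
        then obtain x where z: "z = (x, y)" and x: "x \<in> Q j" by auto
        have xc: "x \<in> cball 0 R" using x Q(2) j R by blast
        have yc: "y \<in> cball 0 R" using y DO R by blast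
        have "a j y < norm (x - y) powr p + \<eta>"
          using dU[OF xc Q(3) yc Q(4)] x j by (auto simp: a_def)
        then have "a j y + \<eta> \<le> norm (x - y) powr p + 2 * \<eta>" by simp
        then have "ennreal (a j y + \<eta>) \<le> ennreal (norm (x - y) powr p + 2 * \<eta>)"
          by (rule ennreal_leI)
        also have "\<dots> = g z" using eta by (simp add: g_def cost_def z ennreal_plus)
        finally show ?thesis using True by simp
      qed simp
    qed
    also have "\<dots> = (\<Sum>j<m. \<integral>\<^sup>+ z. (\<Sum>y\<in>D. g z * indicator (Q j \<times> {y}) z) \<partial>\<gamma>)"
    proof (intro sum.cong refl nn_integral_sum[symmetric])
      fix j y assume "j \<in> {..<m}"
      then show "(\<lambda>z. g z * indicator (Q j \<times> {y}) z) \<in> borel_measurable \<gamma>"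
        using gm indm by (intro borel_measurable_times_ennreal) auto
    qed
    also have "\<dots> = (\<integral>\<^sup>+ z. (\<Sum>j<m. \<Sum>y\<in>D. g z * indicator (Q j \<times> {y}) z) \<partial>\<gamma>)"
    proof (intro nn_integral_sum[symmetric])
      fix j assume "j \<in> {..<m}"
      then show "(\<lambda>z. \<Sum>y\<in>D. g z * indicator (Q j \<times> {y}) z) \<in> borel_measurable \<gamma>"
        using gm indm by (intro borel_measurable_sum borel_measurable_times_ennreal) auto
    qed
    also have "\<dots> \<le> (\<integral>\<^sup>+ z. g z \<partial>\<gamma>)"
    proof (intro nn_integral_mono)
      fix z
      have "(\<Sum>j<m. \<Sum>y\<in>D. g z * indicator (Q j \<times> {y}) z) = g z * (\<Sum>j<m. \<Sum>y\<in>D. indicator (Q j \<times> {y}) z)"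
        by (simp add: sum_distrib_left)
      also have "\<dots> \<le> g z * 1" by (intro mult_left_mono indsum) auto
      finally show "(\<Sum>j<m. \<Sum>y\<in>D. g z * indicator (Q j \<times> {y}) z) \<le> g z" by simp
    qed
    also have "\<dots> = (\<integral>\<^sup>+ z. cost z \<partial>\<gamma>) + ennreal (2 * \<eta>)"
      unfolding g_def using costm by (simp add: nn_integral_add g.emeasure_space_1)
    finally show ?thesis .
  qed
  have intA: "(\<integral>\<^sup>+ x. ennreal (norm (x - xs i) powr p) * indicator (A i) x \<partial>?\<mu>)
      \<le> (\<Sum>j<m. ennreal ((a j (xs i) + \<eta>) * w j i))" if i: "i < k" for i
  proof -
    have phim: "(\<lambda>x. ennreal (norm (x - xs i) powr p)) \<in> borel_measurable ?\<mu>" by measurable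
    have "(\<integral>\<^sup>+ x. ennreal (norm (x - xs i) powr p) * indicator (A i) x \<partial>?\<mu>) =
        (\<integral>\<^sup>+ x. (\<Sum>j<m. ennreal (norm (x - xs i) powr p) * indicator (P j i) x) \<partial>?\<mu>)"
    proof (intro nn_integral_cong)
      fix x
      have "indicator (A i) x = (\<Sum>j<m. indicator (P j i) x :: ennreal)"
        unfolding A_def using PPdisj i by (intro indicator_UN_disjoint) (auto simp: disjoint_family_on_def)
      then show "ennreal (norm (x - xs i) powr p) * indicator (A i) x =
          (\<Sum>j<m. ennreal (norm (x - xs i) powr p) * indicator (P j i) x)"
        by (simp add: sum_distrib_left)
    qed
    also have "\<dots> = (\<Sum>j<m. \<integral>\<^sup>+ x. ennreal (norm (x - xs i) powr p) * indicator (P j i) x \<partial>?\<mu>)"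
    proof (intro nn_integral_sum)
      fix j assume "j \<in> {..<m}"
      then have "P j i \<in> sets ?\<mu>" using Pb i by simp
      then show "(\<lambda>x. ennreal (norm (x - xs i) powr p) * indicator (P j i) x) \<in> borel_measurable ?\<mu>"
        using phim by (intro borel_measurable_times_ennreal borel_measurable_indicator)
    qed
    also have "\<dots> \<le> (\<Sum>j<m. ennreal ((a j (xs i) + \<eta>) * w j i))"
    proof (intro sum_mono)
      fix j assume j: "j \<in> {..<m}"
      have "(\<integral>\<^sup>+ x. ennreal (norm (x - xs i) powr p) * indicator (P j i) x \<partial>?\<mu>) \<le>
          (\<integral>\<^sup>+ x. ennreal (a j (xs i) + \<eta>) * indicator (P j i) x \<partial>?\<mu>)"
      proof (intro nn_integral_mono)
        fix x
        show "ennreal (norm (x - xs i) powr p) * indicator (P j i) x \<le> ennreal (a j (xs i) + \<eta>) * indicator (P j i) x"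
        proof (cases "x \<in> P j i")
          case True
          then have x: "x \<in> Q j" using PQ j i by blast
          have xc: "x \<in> cball 0 R" using x Q(2) j R by blast
          have yc: "xs i \<in> cball 0 R" using xsO i R by blast
          have "norm (x - xs i) powr p < a j (xs i) + \<eta>"
            using dU[OF xc Q(3) yc Q(4)] x j by (auto simp: a_def)
          then have "ennreal (norm (x - xs i) powr p) \<le> ennreal (a j (xs i) + \<eta>)"
            by (intro ennreal_leI) simp
          then show ?thesis using True by simp
        qed simp
      qed
      also have "\<dots> = ennreal (a j (xs i) + \<eta>) * emeasure ?\<mu> (P j i)"
        using Pb j i by (intro nn_integral_cmult_indicator) simp
      also have "\<dots> = ennreal ((a j (xs i) + \<eta>) * w j i)"
        using mP[of j i] j i a0[of j "xs i"] eta w0[OF i, of j]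
        by (simp add: emeasure_eq_ennreal_measure ennreal_mult'[symmetric] del: ennreal_plus)
      finally show "(\<integral>\<^sup>+ x. ennreal (norm (x - xs i) powr p) * indicator (P j i) x \<partial>?\<mu>)
          \<le> ennreal ((a j (xs i) + \<eta>) * w j i)" .
    qed
    finally show ?thesis .
  qed
  have sumeq: "(\<Sum>i<k. \<Sum>j<m. ennreal ((a j (xs i) + \<eta>) * w j i)) = ennreal (\<Sum>j<m. \<Sum>y\<in>D. G j y * (a j y + \<eta>))"
  proof -
    have "(\<Sum>i<k. \<Sum>j<m. ennreal ((a j (xs i) + \<eta>) * w j i)) = ennreal (\<Sum>i<k. \<Sum>j<m. (a j (xs i) + \<eta>) * w j i)"
    proof -
      have nn: "0 \<le> (\<Sum>j<m. (a j (xs i) + \<eta>) * w j i)" if "i < k" for i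
        using a0 eta w0[OF that] by (intro sum_nonneg mult_nonneg_nonneg) (auto intro: add_nonneg_nonneg less_imp_le)
      have "(\<Sum>i<k. \<Sum>j<m. ennreal ((a j (xs i) + \<eta>) * w j i)) = (\<Sum>i<k. ennreal (\<Sum>j<m. (a j (xs i) + \<eta>) * w j i))"
        using a0 eta w0 by (intro sum.cong refl sum_ennreal) (auto intro: mult_nonneg_nonneg add_nonneg_nonneg less_imp_le)
      also have "\<dots> = ennreal (\<Sum>i<k. \<Sum>j<m. (a j (xs i) + \<eta>) * w j i)"
        using nn by (intro sum_ennreal) auto
      finally show ?thesis .
    qed
    also have "(\<Sum>i<k. \<Sum>j<m. (a j (xs i) + \<eta>) * w j i) = (\<Sum>j<m. \<Sum>i<k. w j i * (a j (xs i) + \<eta>))"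
      by (subst sum.swap) (simp add: mult.commute)
    also have "\<dots> = (\<Sum>j<m. \<Sum>y\<in>D. G j y * (a j y + \<eta>))"
    proof (intro sum.cong refl)
      fix j assume "j \<in> {..<m}"
      then show "(\<Sum>i<k. w j i * (a j (xs i) + \<eta>)) = (\<Sum>y\<in>D. G j y * (a j y + \<eta>))"
        using Wa[of j "\<lambda>y. a j y + \<eta>"] by simp
    qed
    finally show ?thesis .
  qed
  have termA: "(\<Sum>i<k. \<integral>\<^sup>+ x\<in>A i. ennreal ((norm (x - xs i) powr p + h i (measure ?\<mu> (A i))) * f x) \<partial>lborel)
      = (\<Sum>i<k. \<integral>\<^sup>+ x. ennreal (norm (x - xs i) powr p) * indicator (A i) x \<partial>?\<mu>) + (\<Sum>i<k. ennreal (h i (c i) * c i))"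
  proof -
    have "(\<Sum>i<k. \<integral>\<^sup>+ x\<in>A i. ennreal ((norm (x - xs i) powr p + h i (measure ?\<mu> (A i))) * f x) \<partial>lborel)
      = (\<Sum>i<k. (\<integral>\<^sup>+ x. ennreal (norm (x - xs i) powr p) * indicator (A i) x \<partial>?\<mu>) + ennreal (h i (c i) * c i))"
    proof (intro sum.cong refl)
      fix i assume i: "i \<in> {..<k}"
      then have "0 \<le> h i (c i)" using c0[of i] c1[of i] hnn by auto
      then show "(\<integral>\<^sup>+ x\<in>A i. ennreal ((norm (x - xs i) powr p + h i (measure ?\<mu> (A i))) * f x) \<partial>lborel) =
          (\<integral>\<^sup>+ x. ennreal (norm (x - xs i) powr p) * indicator (A i) x \<partial>?\<mu>) + ennreal (h i (c i) * c i)"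
        using i AO[of i] Ab[of i] mA[of i] by (subst term_conv) auto
    qed
    then show ?thesis by (simp add: sum.distrib)
  qed
  have "(INF A\<in>partitions k \<Omega> f. \<Sum>i<k. \<integral>\<^sup>+ x\<in>A i.
             ennreal ((norm (x - xs i) powr p + h i (measure (fmeas \<Omega> f) (A i))) * f x) \<partial>lborel)
      \<le> (\<Sum>i<k. \<integral>\<^sup>+ x\<in>A i. ennreal ((norm (x - xs i) powr p + h i (measure ?\<mu> (A i))) * f x) \<partial>lborel)"
    using Apart by (rule INF_lower)
  also have "\<dots> \<le> (\<Sum>i<k. \<Sum>j<m. ennreal ((a j (xs i) + \<eta>) * w j i)) + (\<Sum>i<k. ennreal (h i (c i) * c i))"
    unfolding termA by (intro add_right_mono sum_mono intA) auto
  also have "\<dots> \<le> ((\<integral>\<^sup>+ z. cost z \<partial>\<gamma>) + ennreal (2 * \<eta>)) + (\<Sum>i<k. ennreal (h i (c i) * c i))"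
    unfolding sumeq by (intro add_right_mono gbound)
  finally show ?thesis by (simp add: cost_def ac_simps)
qed

end

theorem lemma3p2:
  fixes \<Omega> :: "'a::euclidean_space set" and f :: "'a \<Rightarrow> real" and p :: real
    and k :: nat and xs :: "nat \<Rightarrow> 'a" and h :: "nat \<Rightarrow> real \<Rightarrow> real"
  assumes "\<Omega> \<in> sets borel" and "bounded \<Omega>"
    and "\<And>x. x \<in> \<Omega> \<Longrightarrow> 0 \<le> f x"
    and "set_integrable lborel \<Omega> f" and "(\<integral>x\<in>\<Omega>. f x \<partial>lborel) = 1"
    and "1 \<le> p"
    and "\<And>i. i < k \<Longrightarrow> xs i \<in> \<Omega>"
    and "\<And>i t. i < k \<Longrightarrow> 0 \<le> t \<Longrightarrow> t \<le> 1 \<Longrightarrow> 0 \<le> h i t"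
  shows "(INF A\<in>partitions k \<Omega> f. \<Sum>i<k. \<integral>\<^sup>+ x\<in>A i.
             ennreal ((norm (x - xs i) powr p + h i (measure (fmeas \<Omega> f) (A i))) * f x) \<partial>lborel)
       = (INF c\<in>simplex_S k. Wpp p (fmeas \<Omega> f) (dirac_comb k c xs)
             + (\<Sum>i<k. ennreal (h i (c i) * c i)))"
proof -
  interpret OTS \<Omega> f using assms(1-5) by unfold_locales auto
  show ?thesis
  proof (rule antisym)
    show "(INF A\<in>partitions k \<Omega> f. \<Sum>i<k. \<integral>\<^sup>+ x\<in>A i.
             ennreal ((norm (x - xs i) powr p + h i (measure (fmeas \<Omega> f) (A i))) * f x) \<partial>lborel)
       \<le> (INF c\<in>simplex_S k. Wpp p (fmeas \<Omega> f) (dirac_comb k c xs)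
             + (\<Sum>i<k. ennreal (h i (c i) * c i)))"
    proof (rule INF_greatest)
      fix c assume cS: "c \<in> simplex_S k"
      let ?W = "Wpp p (fmeas \<Omega> f) (dirac_comb k c xs)"
      let ?H = "(\<Sum>i<k. ennreal (h i (c i) * c i))"
      show "(INF A\<in>partitions k \<Omega> f. \<Sum>i<k. \<integral>\<^sup>+ x\<in>A i.
             ennreal ((norm (x - xs i) powr p + h i (measure (fmeas \<Omega> f) (A i))) * f x) \<partial>lborel)
          \<le> ?W + ?H"
      proof (rule ennreal_le_epsilon)
        fix e :: real assume lt: "?W + ?H < top" and e: "0 < e"
        have "?W \<le> ?W + ?H" by simp
        then have Wt: "?W < top" using lt by (rule le_less_trans)
        then obtain w where w: "?W = ennreal w" "0 \<le> w" by (cases "?W") auto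
        have "?W < ennreal (w + e / 2)" using w e by (simp add: ennreal_less_iff)
        then obtain \<gamma> where g: "\<gamma> \<in> couplings (fmeas \<Omega> f) (dirac_comb k c xs)"
          and gl: "(\<integral>\<^sup>+ z. ennreal (norm (fst z - snd z) powr p) \<partial>\<gamma>) < ennreal (w + e / 2)"
          unfolding Wpp_def by (auto simp: INF_less_iff)
        have "(INF A\<in>partitions k \<Omega> f. \<Sum>i<k. \<integral>\<^sup>+ x\<in>A i.
             ennreal ((norm (x - xs i) powr p + h i (measure (fmeas \<Omega> f) (A i))) * f x) \<partial>lborel)
          \<le> (\<integral>\<^sup>+ z. ennreal (norm (fst z - snd z) powr p) \<partial>\<gamma>) + ?H + ennreal (2 * (e / 4))"
          using e by (intro dir2[OF assms(6,7,8) cS g]) auto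
        also have "\<dots> \<le> ennreal (w + e / 2) + ?H + ennreal (2 * (e / 4))"
          using gl by (intro add_right_mono) auto
        also have "\<dots> = ?W + ?H + ennreal e"
          using w e by (simp add: ennreal_plus[symmetric] add_ac del: ennreal_plus)
        finally show "(INF A\<in>partitions k \<Omega> f. \<Sum>i<k. \<integral>\<^sup>+ x\<in>A i.
             ennreal ((norm (x - xs i) powr p + h i (measure (fmeas \<Omega> f) (A i))) * f x) \<partial>lborel)
          \<le> ?W + ?H + ennreal e" .
      qed
    qed
  next
    show "(INF c\<in>simplex_S k. Wpp p (fmeas \<Omega> f) (dirac_comb k c xs)
             + (\<Sum>i<k. ennreal (h i (c i) * c i)))
       \<le> (INF A\<in>partitions k \<Omega> f. \<Sum>i<k. \<integral>\<^sup>+ x\<in>A i.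
             ennreal ((norm (x - xs i) powr p + h i (measure (fmeas \<Omega> f) (A i))) * f x) \<partial>lborel)"
    proof (rule INF_greatest)
      fix A assume A: "A \<in> partitions k \<Omega> f"
      from dir1[where p=p and xs=xs and h=h, OF A assms(8)] obtain c where "c \<in> simplex_S k"
        "Wpp p (fmeas \<Omega> f) (dirac_comb k c xs) + (\<Sum>i<k. ennreal (h i (c i) * c i))
          \<le> (\<Sum>i<k. \<integral>\<^sup>+ x\<in>A i. ennreal ((norm (x - xs i) powr p + h i (measure (fmeas \<Omega> f) (A i))) * f x) \<partial>lborel)"
        by blast
      then show "(INF c\<in>simplex_S k. Wpp p (fmeas \<Omega> f) (dirac_comb k c xs)
             + (\<Sum>i<k. ennreal (h i (c i) * c i)))
          \<le> (\<Sum>i<k. \<integral>\<^sup>+ x\<in>A i. ennreal ((norm (x - xs i) powr p + h i (measure (fmeas \<Omega> f) (A i))) * f x) \<partial>lborel)"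
        by (intro INF_lower2[where i=c])
    qed
  qed
qed

end
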